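(* Let $\sigma_1$ and $\sigma_2$ be compositions of the positive integers $m_1$ and $m_2$ respectively. If $\Gamma(\mathsf{hypo},\sigma_1)$ and $\Gamma(\mathsf{hypo},\sigma_2)$ are isomorphic as unlabelled directed graphs, then $m_1=m_2$.
   Context: A quasi-ribbon tableau of shape $\sigma=(\sigma_1,\dots,\sigma_r)$ (a composition) is a filling with positive integers of the diagram having $\sigma_i$ cells in row $i$, the leftmost cell of row $i+1$ directly below the rightmost cell of row $i$, with entries weakly increasing along rows and strictly increasing down columns. Its column reading is the word obtained by reading columns left to right, each column bottom to top. Quasi-Kashiwara operator $f_i$ ($i\ge1$) on a word $u$ over the positive integers: undefined if $u$ contains a (not necessarily consecutive) subsequence $(i+1)\,i$ or contains no letter $i$; otherwise $f_i(u)$ replaces the rightmost $i$ by $i+1$. $\Gamma(\mathsf{hypo},\sigma)$ is the directed graph whose vertices are the quasi-ribbon tableaux of shape $\sigma$ (identified with their column readings), with an edge $u\to f_i(u)$ labelled $i$ whenever $f_i(u)$ is defined. *)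

theory Defs
  imports Main
begin

definition is_composition :: "nat list \<Rightarrow> nat \<Rightarrow> bool" where
  "is_composition \<sigma> m \<longleftrightarrow> (\<forall>x\<in>set \<sigma>. 0 < x) \<and> sum_list \<sigma> = m"

text \<open>Row i (0-based) of the quasi-ribbon diagram starts in column row_start; each row
  begins directly below the last cell of the previous row.\<close>
definition row_start :: "nat list \<Rightarrow> nat \<Rightarrow> nat" where
  "row_start \<sigma> i = (\<Sum>k<i. \<sigma> ! k - 1)"

definition qr_cells :: "nat list \<Rightarrow> (nat \<times> nat) set" where
  "qr_cells \<sigma> = {(i, j). i < length \<sigma> \<and> row_start \<sigma> i \<le> j \<and> j < row_start \<sigma> i + \<sigma> ! i}"

definition qr_width :: "nat list \<Rightarrow> nat" where
  "qr_width \<sigma> = (\<Sum>k<length \<sigma>. \<sigma> ! k - 1) + 1"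

definition is_qrt :: "nat list \<Rightarrow> (nat \<times> nat \<Rightarrow> nat) \<Rightarrow> bool" where
  "is_qrt \<sigma> T \<longleftrightarrow>
     (\<forall>c\<in>qr_cells \<sigma>. 0 < T c) \<and>
     (\<forall>i j. (i, j) \<in> qr_cells \<sigma> \<and> (i, Suc j) \<in> qr_cells \<sigma> \<longrightarrow> T (i, j) \<le> T (i, Suc j)) \<and>
     (\<forall>i j. (i, j) \<in> qr_cells \<sigma> \<and> (Suc i, j) \<in> qr_cells \<sigma> \<longrightarrow> T (i, j) < T (Suc i, j))"

definition col_reading :: "nat list \<Rightarrow> (nat \<times> nat \<Rightarrow> nat) \<Rightarrow> nat list" where
  "col_reading \<sigma> T =
     concat (map (\<lambda>j. map (\<lambda>i. T (i, j))
                         (rev (filter (\<lambda>i. (i, j) \<in> qr_cells \<sigma>) [0..<length \<sigma>])))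
                 [0..<qr_width \<sigma>])"

definition quasi_f :: "nat \<Rightarrow> nat list \<Rightarrow> nat list option" where
  "quasi_f i u =
     (if 1 \<le> i \<and> i \<in> set u \<and>
         \<not> (\<exists>p q. p < q \<and> q < length u \<and> u ! p = Suc i \<and> u ! q = i)
      then Some (u[(GREATEST k. k < length u \<and> u ! k = i) := Suc i])
      else None)"

definition hypo_vertices :: "nat list \<Rightarrow> nat list set" where
  "hypo_vertices \<sigma> = {col_reading \<sigma> T | T. is_qrt \<sigma> T}"

definition hypo_edges :: "nat list \<Rightarrow> (nat list \<times> nat list) set" where
  "hypo_edges \<sigma> = {(u, v). u \<in> hypo_vertices \<sigma> \<and> (\<exists>i\<ge>1. quasi_f i u = Some v)}"

definition digraph_iso :: "'a set \<Rightarrow> ('a \<times> 'a) set \<Rightarrow> 'b set \<Rightarrow> ('b \<times> 'b) set \<Rightarrow> bool" where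
  "digraph_iso V1 E1 V2 E2 \<longleftrightarrow>
     (\<exists>\<phi>. bij_betw \<phi> V1 V2 \<and>
          (\<forall>u\<in>V1. \<forall>v\<in>V1. (u, v) \<in> E1 \<longleftrightarrow> (\<phi> u, \<phi> v) \<in> E2))"

end

theory Submission
  imports Defs
begin

definition cells :: "nat list \<Rightarrow> (nat \<times> nat) list" where
  "cells \<sigma> = concat (map (\<lambda>j. map (\<lambda>i. (i, j))
                         (rev (filter (\<lambda>i. (i, j) \<in> qr_cells \<sigma>) [0..<length \<sigma>])))
                 [0..<qr_width \<sigma>])"

lemma col_reading_cells: "col_reading \<sigma> T = map T (cells \<sigma>)"
  unfolding col_reading_def cells_def by (simp add: map_concat comp_def rev_map)

lemma distinct_gen:
  "distinct js \<Longrightarrow> (\<forall>j. distinct (g j)) \<Longrightarrow>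
   distinct (concat (map (\<lambda>j. map (\<lambda>i. (i, j)) (g j)) js))"
  by (induction js) (auto simp: distinct_map inj_on_def)

lemma distinct_cells: "distinct (cells \<sigma>)"
  unfolding cells_def by (rule distinct_gen) auto

lemma cell_col_bound:
  assumes "(i, j) \<in> qr_cells \<sigma>" shows "j < qr_width \<sigma>"
proof -
  have i: "i < length \<sigma>" and j: "j < row_start \<sigma> i + \<sigma> ! i"
    using assms by (auto simp: qr_cells_def)
  have "row_start \<sigma> i + \<sigma> ! i \<le> (\<Sum>k<Suc i. \<sigma> ! k - 1) + 1"
    by (simp add: row_start_def)
  also have "(\<Sum>k<Suc i. \<sigma> ! k - 1) \<le> (\<Sum>k<length \<sigma>. \<sigma> ! k - 1)"
    using i by (intro sum_mono2) auto
  finally show ?thesis using j by (simp add: qr_width_def)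
qed

lemma set_cells: "set (cells \<sigma>) = qr_cells \<sigma>"
proof -
  have "\<And>i j. (i, j) \<in> qr_cells \<sigma> \<Longrightarrow> i < length \<sigma>" by (auto simp: qr_cells_def)
  then show ?thesis unfolding cells_def using cell_col_bound by fastforce
qed

lemma qr_cells_Sigma:
  "qr_cells \<sigma> = (SIGMA i:{..<length \<sigma>}. {row_start \<sigma> i..<row_start \<sigma> i + \<sigma> ! i})"
  by (auto simp: qr_cells_def)

lemma card_qr_cells: "card (qr_cells \<sigma>) = sum_list \<sigma>"
  by (simp add: qr_cells_Sigma sum_list_sum_nth atLeast0LessThan)

lemma finite_qr_cells: "finite (qr_cells \<sigma>)"
  by (simp add: qr_cells_Sigma)

lemma length_cells: "length (cells \<sigma>) = sum_list \<sigma>"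
  using distinct_card[OF distinct_cells, of \<sigma>] by (simp add: set_cells card_qr_cells)


definition T0 :: "nat list \<Rightarrow> nat \<times> nat \<Rightarrow> nat" where
  "T0 \<sigma> c = 2 * (fst c * qr_width \<sigma> + snd c) + 1"

lemma T0_inj: "inj_on (T0 \<sigma>) (qr_cells \<sigma>)"
proof (rule inj_onI)
  fix x y assume x: "x \<in> qr_cells \<sigma>" and y: "y \<in> qr_cells \<sigma>" and e: "T0 \<sigma> x = T0 \<sigma> y"
  obtain a b where [simp]: "x = (a, b)" by force
  obtain c d where [simp]: "y = (c, d)" by force
  have "b < qr_width \<sigma>" "d < qr_width \<sigma>" using x y cell_col_bound by auto
  moreover have "a * qr_width \<sigma> + b = c * qr_width \<sigma> + d" using e by (simp add: T0_def)
  ultimately have "a = c \<and> b = d"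
  proof -
    assume b: "b < qr_width \<sigma>" and d: "d < qr_width \<sigma>" and eq: "a * qr_width \<sigma> + b = c * qr_width \<sigma> + d"
    have "(a * qr_width \<sigma> + b) div qr_width \<sigma> = a" "(a * qr_width \<sigma> + b) mod qr_width \<sigma> = b"
      using b by auto
    moreover have "(c * qr_width \<sigma> + d) div qr_width \<sigma> = c" "(c * qr_width \<sigma> + d) mod qr_width \<sigma> = d"
      using d by auto
    ultimately show ?thesis using eq by metis
  qed
  then show "x = y" by simp
qed

definition nbrs :: "nat list \<Rightarrow> nat list \<Rightarrow> nat list set" where
  "nbrs \<sigma> u = {v \<in> hypo_vertices \<sigma>. (u, v) \<in> hypo_edges \<sigma>}"

lemma nbrs_upper:
  assumes "u \<in> hypo_vertices \<sigma>"
  shows "finite (nbrs \<sigma> u) \<and> card (nbrs \<sigma> u) \<le> sum_list \<sigma>"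
proof -
  have sub: "nbrs \<sigma> u \<subseteq> (\<lambda>i. the (quasi_f i u)) ` set u"
  proof
    fix v assume "v \<in> nbrs \<sigma> u"
    then obtain i where "quasi_f i u = Some v" by (auto simp: nbrs_def hypo_edges_def)
    then have "i \<in> set u" "v = the (quasi_f i u)" by (auto simp: quasi_f_def split: if_splits)
    then show "v \<in> (\<lambda>i. the (quasi_f i u)) ` set u" by blast
  qed
  have fin: "finite (nbrs \<sigma> u)" using finite_subset[OF sub] by blast
  have "card (nbrs \<sigma> u) \<le> card (set u)"
    using card_mono[OF _ sub] card_image_le[of "set u" "\<lambda>i. the (quasi_f i u)"] by simp
  also have "\<dots> \<le> length u" by (rule card_length)
  also have "length u = sum_list \<sigma>"
    using assms by (auto simp: hypo_vertices_def col_reading_cells length_cells)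
  finally show ?thesis using fin by simp
qed


definition Tm :: "nat list \<Rightarrow> nat \<times> nat \<Rightarrow> nat \<times> nat \<Rightarrow> nat" where
  "Tm \<sigma> c = (T0 \<sigma>)(c := T0 \<sigma> c + 1)"

lemma odd_aux: "(2::nat) * a + 1 \<noteq> Suc (2 * b + 1)" by presburger

lemma odd_aux2: "(2::nat) * a + 1 < 2 * b + 1 \<Longrightarrow> 2 * a + 1 + 1 < 2 * b + 1" by presburger

lemma T0_odd: "T0 \<sigma> x \<noteq> Suc (T0 \<sigma> y)"
  unfolding T0_def by (rule odd_aux)

lemma Tm_mono:
  assumes "T0 \<sigma> x < T0 \<sigma> y" shows "Tm \<sigma> c x < Tm \<sigma> c y"
proof -
  have "T0 \<sigma> x + 1 < T0 \<sigma> y" using assms unfolding T0_def by (rule odd_aux2)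
  then show ?thesis by (auto simp: Tm_def)
qed

lemma Tm_qrt: "is_qrt \<sigma> (Tm \<sigma> c)"
proof -
  have r: "T0 \<sigma> (i, j) < T0 \<sigma> (i, Suc j)" for i j by (simp add: T0_def)
  have d: "T0 \<sigma> (i, j) < T0 \<sigma> (Suc i, j)" for i j
  proof -
    have "qr_width \<sigma> > 0" by (simp add: qr_width_def)
    then show ?thesis by (simp add: T0_def)
  qed
  show ?thesis unfolding is_qrt_def
    using Tm_mono[OF r] Tm_mono[OF d] by (auto simp: Tm_def T0_def less_imp_le)
qed

lemma T0_qrt: "is_qrt \<sigma> (T0 \<sigma>)"
proof -
  have d: "T0 \<sigma> (i, j) < T0 \<sigma> (Suc i, j)" for i j
  proof -
    have "qr_width \<sigma> > 0" by (simp add: qr_width_def)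
    then show ?thesis by (simp add: T0_def)
  qed
  show ?thesis unfolding is_qrt_def using d by (auto simp: T0_def)
qed

lemma quasi_f_T0:
  assumes c: "c \<in> qr_cells \<sigma>"
  shows "quasi_f (T0 \<sigma> c) (col_reading \<sigma> (T0 \<sigma>)) = Some (col_reading \<sigma> (Tm \<sigma> c))"
proof -
  let ?u = "map (T0 \<sigma>) (cells \<sigma>)"
  let ?a = "T0 \<sigma> c"
  have cin: "c \<in> set (cells \<sigma>)" using c set_cells by blast
  then obtain k0 where k0: "k0 < length (cells \<sigma>)" "cells \<sigma> ! k0 = c"
    by (auto simp: in_set_conv_nth)
  have uniq: "k = k0" if "k < length (cells \<sigma>)" "?u ! k = ?a" for k
  proof -
    have m: "cells \<sigma> ! k \<in> qr_cells \<sigma>" using nth_mem[OF that(1)] set_cells[of \<sigma>] by simp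
    have "T0 \<sigma> (cells \<sigma> ! k) = T0 \<sigma> c" using that by simp
    then have "cells \<sigma> ! k = c" using inj_onD[OF T0_inj _ m c] by blast
    then show ?thesis using k0 that(1) nth_eq_iff_index_eq[OF distinct_cells[of \<sigma>], of k k0] by simp
  qed
  have G: "(GREATEST k. k < length ?u \<and> ?u ! k = ?a) = k0"
  proof (rule Greatest_equality)
    show "k0 < length ?u \<and> ?u ! k0 = ?a" using k0 by simp
    fix y assume "y < length ?u \<and> ?u ! y = ?a"
    then have "y = k0" using uniq[of y] by simp
    then show "y \<le> k0" by simp
  qed
  have nop: "\<not> (\<exists>p q. p < q \<and> q < length ?u \<and> ?u ! p = Suc ?a \<and> ?u ! q = ?a)"
  proof
    assume "\<exists>p q. p < q \<and> q < length ?u \<and> ?u ! p = Suc ?a \<and> ?u ! q = ?a"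
    then obtain p q where "p < q" "q < length ?u" "?u ! p = Suc ?a" by blast
    then have "T0 \<sigma> (cells \<sigma> ! p) = Suc ?a" by simp
    then show False using T0_odd by blast
  qed
  have ain: "?a \<in> set ?u" using cin by auto
  have one: "1 \<le> ?a" by (simp add: T0_def)
  have upd: "?u[k0 := Suc ?a] = map (Tm \<sigma> c) (cells \<sigma>)"
  proof (rule nth_equalityI)
    show "length (?u[k0 := Suc ?a]) = length (map (Tm \<sigma> c) (cells \<sigma>))" by simp
    fix p assume "p < length (?u[k0 := Suc ?a])"
    then have p: "p < length (cells \<sigma>)" by simp
    show "?u[k0 := Suc ?a] ! p = map (Tm \<sigma> c) (cells \<sigma>) ! p"
    proof (cases "p = k0")
      case True then show ?thesis using k0 by (simp add: Tm_def)
    next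
      case False
      then have "cells \<sigma> ! p \<noteq> c" using k0 p nth_eq_iff_index_eq[OF distinct_cells[of \<sigma>], of p k0] by simp
      then show ?thesis using p False by (simp add: Tm_def)
    qed
  qed
  have "quasi_f ?a ?u = Some (?u[(GREATEST k. k < length ?u \<and> ?u ! k = ?a) := Suc ?a])"
    unfolding quasi_f_def by (rule if_P) (use nop ain one in blast)
  then show ?thesis unfolding col_reading_cells G upd .
qed

lemma nbrs_lower:
  "sum_list \<sigma> \<le> card (nbrs \<sigma> (col_reading \<sigma> (T0 \<sigma>)))"
proof -
  let ?u = "col_reading \<sigma> (T0 \<sigma>)"
  let ?v = "\<lambda>c. col_reading \<sigma> (Tm \<sigma> c)"
  have uV: "?u \<in> hypo_vertices \<sigma>" using T0_qrt by (auto simp: hypo_vertices_def)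
  have sub: "?v ` qr_cells \<sigma> \<subseteq> nbrs \<sigma> ?u"
  proof
    fix v assume "v \<in> ?v ` qr_cells \<sigma>"
    then obtain c where c: "c \<in> qr_cells \<sigma>" "v = ?v c" by blast
    have "v \<in> hypo_vertices \<sigma>" unfolding hypo_vertices_def using c Tm_qrt[of \<sigma> c] by blast
    moreover have "(?u, v) \<in> hypo_edges \<sigma>"
      using uV quasi_f_T0[OF c(1)] c(2) unfolding hypo_edges_def
      by (auto intro!: exI[of _ "T0 \<sigma> c"] simp: T0_def)
    ultimately show "v \<in> nbrs \<sigma> ?u" by (simp add: nbrs_def)
  qed
  have inj: "inj_on ?v (qr_cells \<sigma>)"
  proof (rule inj_onI)
    fix c d assume c: "c \<in> qr_cells \<sigma>" and d: "d \<in> qr_cells \<sigma>" and e: "?v c = ?v d"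
    have "Suc (T0 \<sigma> c) \<in> set (?v c)"
      using c set_cells by (force simp: col_reading_cells Tm_def)
    then have "Suc (T0 \<sigma> c) \<in> set (?v d)" using e by simp
    then obtain x where x: "x \<in> qr_cells \<sigma>" "Tm \<sigma> d x = Suc (T0 \<sigma> c)"
      using set_cells by (auto simp: col_reading_cells)
    show "c = d"
    proof (cases "x = d")
      case True
      then have "T0 \<sigma> d = T0 \<sigma> c" using x by (simp add: Tm_def)
      then show ?thesis using T0_inj[of \<sigma>] c d by (auto dest: inj_onD)
    next
      case False
      then show ?thesis using x T0_odd by (simp add: Tm_def)
    qed
  qed
  have "sum_list \<sigma> = card (?v ` qr_cells \<sigma>)"
    using card_image[OF inj] card_qr_cells by simp
  also have "\<dots> \<le> card (nbrs \<sigma> ?u)"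
    using card_mono[OF _ sub] nbrs_upper[OF uV] by simp
  finally show ?thesis .
qed


lemma iso_le:
  assumes iso: "digraph_iso (hypo_vertices \<sigma>1) (hypo_edges \<sigma>1) (hypo_vertices \<sigma>2) (hypo_edges \<sigma>2)"
  shows "sum_list \<sigma>1 \<le> sum_list \<sigma>2 \<and> sum_list \<sigma>2 \<le> sum_list \<sigma>1"
proof -
  obtain \<phi> where bij: "bij_betw \<phi> (hypo_vertices \<sigma>1) (hypo_vertices \<sigma>2)"
    and E: "\<forall>u\<in>hypo_vertices \<sigma>1. \<forall>v\<in>hypo_vertices \<sigma>1.
              (u, v) \<in> hypo_edges \<sigma>1 \<longleftrightarrow> (\<phi> u, \<phi> v) \<in> hypo_edges \<sigma>2"
    using iso unfolding digraph_iso_def by blast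
  have inj: "inj_on \<phi> (hypo_vertices \<sigma>1)" and img: "\<phi> ` hypo_vertices \<sigma>1 = hypo_vertices \<sigma>2"
    using bij by (auto simp: bij_betw_def)
  have N: "nbrs \<sigma>2 (\<phi> u) = \<phi> ` nbrs \<sigma>1 u" if u: "u \<in> hypo_vertices \<sigma>1" for u
  proof
    show "\<phi> ` nbrs \<sigma>1 u \<subseteq> nbrs \<sigma>2 (\<phi> u)"
      using E u img by (auto simp: nbrs_def)
    show "nbrs \<sigma>2 (\<phi> u) \<subseteq> \<phi> ` nbrs \<sigma>1 u"
    proof
      fix w assume w: "w \<in> nbrs \<sigma>2 (\<phi> u)"
      then obtain v where v: "v \<in> hypo_vertices \<sigma>1" "w = \<phi> v"
        using img by (auto simp: nbrs_def)
      then have "(u, v) \<in> hypo_edges \<sigma>1" using E u w by (auto simp: nbrs_def)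
      then show "w \<in> \<phi> ` nbrs \<sigma>1 u" using v by (auto simp: nbrs_def)
    qed
  qed
  have C: "card (nbrs \<sigma>2 (\<phi> u)) = card (nbrs \<sigma>1 u)" if u: "u \<in> hypo_vertices \<sigma>1" for u
  proof -
    have "nbrs \<sigma>1 u \<subseteq> hypo_vertices \<sigma>1" by (auto simp: nbrs_def)
    then have "inj_on \<phi> (nbrs \<sigma>1 u)" using inj inj_on_subset by blast
    then show ?thesis using N[OF u] card_image by metis
  qed
  let ?u1 = "col_reading \<sigma>1 (T0 \<sigma>1)"
  have u1: "?u1 \<in> hypo_vertices \<sigma>1" using T0_qrt by (auto simp: hypo_vertices_def)
  have "sum_list \<sigma>1 \<le> card (nbrs \<sigma>2 (\<phi> ?u1))" using nbrs_lower[of \<sigma>1] C[OF u1] by simp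
  also have "\<dots> \<le> sum_list \<sigma>2" using nbrs_upper u1 img by blast
  finally have le1: "sum_list \<sigma>1 \<le> sum_list \<sigma>2" .
  let ?u2 = "col_reading \<sigma>2 (T0 \<sigma>2)"
  have "?u2 \<in> hypo_vertices \<sigma>2" using T0_qrt by (auto simp: hypo_vertices_def)
  then obtain u where u: "u \<in> hypo_vertices \<sigma>1" "?u2 = \<phi> u" using img by auto
  have "sum_list \<sigma>2 \<le> card (nbrs \<sigma>1 u)" using nbrs_lower[of \<sigma>2] C[OF u(1)] u(2) by simp
  also have "\<dots> \<le> sum_list \<sigma>1" using nbrs_upper u(1) by blast
  finally show ?thesis using le1 by simp
qed

theorem corollary4p4:
  fixes \<sigma>1 \<sigma>2 :: "nat list" and m1 m2 :: nat
  assumes "0 < m1" and "0 < m2"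
    and "is_composition \<sigma>1 m1" and "is_composition \<sigma>2 m2"
    and "digraph_iso (hypo_vertices \<sigma>1) (hypo_edges \<sigma>1) (hypo_vertices \<sigma>2) (hypo_edges \<sigma>2)"
  shows "m1 = m2"
  using iso_le[OF assms(5)] assms(3,4) by (simp add: is_composition_def)

end
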